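(* Let $K:[0,\infty)\to[0,\infty)$ satisfy: (AK1) $K$ is non-increasing and strictly positive on $[0,\infty)$; (AK2) $K(0)=1$ and $c_K\int_{\mathbb{R}^d}K(\|\mathbf{x}\|)\,d\mathbf{x}=1$ for some constant $c_K>0$; (AK3) there exist $A,\alpha>0$ with $K(x)/K(y)\le A\exp(-(x-y)^\alpha)$ for all $0\le y\le x$. For $\sigma>0$ let $K_\sigma(x)=K(x/\sigma)$. Let $\mathcal{X}=\{\mathbf{x}_1,\dots,\mathbf{x}_n\}\subset\mathbb{R}^d$ and suppose there is a partition of $\mathcal{X}$ into nonempty sets $\mathcal{C}_1,\dots,\mathcal{C}_k$ such that $\min_{m\in[k]}d(\mathcal{C}_m,\mathcal{X}\setminus\mathcal{C}_m)-\max_{l\in[k]}\delta_l=\delta>0$, where $\mathcal{C}_l$ is connected at distance $\delta_l$ for each $l\in[k]$. Let $\mathbf{U}$ have as columns the eigenvectors of the unnormalised Laplacian of the graph $(\mathcal{X},K_\sigma)$. Then, provided $0<\sigma<\delta\log(An^{z/3})^{-1/\alpha}$, where $z$ satisfies $n^{z-15}\ge81k^{15}$, we have $$\max_{\substack{i,j\in[n],l\in[k]:\\\mathbf{x}_i,\mathbf{x}_j\in\mathcal{C}_l}}\|\mathbf{U}_{i,1:k}-\mathbf{U}_{j,1:k}\|\le\left(\frac{k^3}{n^{z-9}}\right)^{1/6},\qquad \min_{\substack{i,j\in[n],l\in[k]:\\\mathbf{x}_i\in\mathcal{C}_l,\mathbf{x}_j\notin\mathcal{C}_l}}\|\mathb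f{U}_{i,1:k}-\mathbf{U}_{j,1:k}\|\ge\sqrt{\frac{2}{n}}-6\left(\frac{k^{27}}{n^{z-15}}\right)^{1/24}.$$
   Context: $[n]=\{1,\dots,n\}$; $\|\cdot\|$ is the Euclidean norm. For sets $S,U$, $d(S,U)=\inf_{\mathbf{x}\in S,\mathbf{y}\in U}\|\mathbf{x}-\mathbf{y}\|$. A set $S$ is connected at distance $\delta$ if there is no partition of $S$ into $S_1,S_2$ with $d(S_1,S_2)>\delta$. The graph $(\mathcal{X},K_\sigma)$ has affinity matrix $\mathbf{A}_{ij}=K_\sigma(\|\mathbf{x}_i-\mathbf{x}_j\|)$ (including $i=j$), degree matrix $\mathbf{D}=\mathrm{diag}(\sum_j\mathbf{A}_{ij})$, unnormalised Laplacian $\mathbf{D}-\mathbf{A}$. "The eigenvectors" means an orthonormal eigenbasis arranged as columns with eigenvalues in nondecreasing order; $\mathbf{U}_{i,1:k}$ is the first $k$ entries of row $i$. *)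

theory Defs
  imports "HOL-Analysis.Analysis" "HOL-Library.Extended_Real"
begin

text \<open>Distance between sets, d(S,U) = inf over pairs; valued in ereal so that an
  empty set gives +infinity, as for the real infimum over the empty set.\<close>
definition set_dist :: "'a::metric_space set \<Rightarrow> 'a set \<Rightarrow> ereal" where
  "set_dist S U = (INF p \<in> S \<times> U. ereal (dist (fst p) (snd p)))"

definition connected_at_dist :: "real \<Rightarrow> 'a::metric_space set \<Rightarrow> bool" where
  "connected_at_dist \<delta> S \<longleftrightarrow>
     \<not> (\<exists>S1 S2. S1 \<noteq> {} \<and> S2 \<noteq> {} \<and> S1 \<union> S2 = S \<and> S1 \<inter> S2 = {}
              \<and> set_dist S1 S2 > ereal \<delta>)"

text \<open>Affinity matrix of the graph (X, K_sigma) with points x 0, ..., x (n-1),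
  K_sigma(t) = K(t / sigma); matrices are functions on indices below n.\<close>
definition affinity :: "(real \<Rightarrow> real) \<Rightarrow> real \<Rightarrow> (nat \<Rightarrow> 'a::real_normed_vector) \<Rightarrow> nat \<Rightarrow> nat \<Rightarrow> real" where
  "affinity K \<sigma> x i j = K (norm (x i - x j) / \<sigma>)"

definition laplacian :: "nat \<Rightarrow> (real \<Rightarrow> real) \<Rightarrow> real \<Rightarrow> (nat \<Rightarrow> 'a::real_normed_vector) \<Rightarrow> nat \<Rightarrow> nat \<Rightarrow> real" where
  "laplacian n K \<sigma> x i j =
     (if i = j then (\<Sum>m<n. affinity K \<sigma> x i m) else 0) - affinity K \<sigma> x i j"

definition ordered_orthonormal_eigenbasis ::
  "nat \<Rightarrow> (nat \<Rightarrow> nat \<Rightarrow> real) \<Rightarrow> (nat \<Rightarrow> nat \<Rightarrow> real) \<Rightarrow> (nat \<Rightarrow> real) \<Rightarrow> bool" where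
  "ordered_orthonormal_eigenbasis n L U lam \<longleftrightarrow>
     (\<forall>a<n. \<forall>b<n. (\<Sum>i<n. U i a * U i b) = (if a = b then 1 else 0)) \<and>
     (\<forall>a<n. \<forall>i<n. (\<Sum>j<n. L i j * U j a) = lam a * U i a) \<and>
     (\<forall>a b. a \<le> b \<longrightarrow> b < n \<longrightarrow> lam a \<le> lam b)"

definition row_dist :: "nat \<Rightarrow> (nat \<Rightarrow> nat \<Rightarrow> real) \<Rightarrow> nat \<Rightarrow> nat \<Rightarrow> real" where
  "row_dist k U i j = sqrt (\<Sum>a<k. (U i a - U j a)\<^sup>2)"

end

theory Submission
  imports Defs
begin

lemma swap3:
  fixes F :: "nat \<Rightarrow> nat \<Rightarrow> nat \<Rightarrow> real"
  shows "(\<Sum>j\<in>J. \<Sum>a\<in>A. \<Sum>b\<in>B. F j a b) = (\<Sum>a\<in>A. \<Sum>b\<in>B. \<Sum>j\<in>J. F j a b)"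
proof -
  have "(\<Sum>j\<in>J. \<Sum>a\<in>A. \<Sum>b\<in>B. F j a b) = (\<Sum>a\<in>A. \<Sum>j\<in>J. \<Sum>b\<in>B. F j a b)"
    by (rule sum.swap)
  also have "\<dots> = (\<Sum>a\<in>A. \<Sum>b\<in>B. \<Sum>j\<in>J. F j a b)"
    by (rule sum.cong[OF refl], rule sum.swap)
  finally show ?thesis .
qed

lemma frob_aux:
  fixes P :: "nat \<Rightarrow> nat \<Rightarrow> real"
  shows "(\<Sum>i<N. \<Sum>j<N. (\<Sum>a<M. P i a * P j a)\<^sup>2) = (\<Sum>a<M. \<Sum>b<M. (\<Sum>i<N. P i a * P i b)\<^sup>2)"
proof -
  have "(\<Sum>i<N. \<Sum>j<N. (\<Sum>a<M. P i a * P j a)\<^sup>2) =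
        (\<Sum>i<N. \<Sum>j<N. \<Sum>a<M. \<Sum>b<M. P i a * P j a * (P i b * P j b))"
    by (simp add: power2_eq_square sum_product)
  also have "\<dots> = (\<Sum>i<N. \<Sum>a<M. \<Sum>b<M. \<Sum>j<N. P i a * P j a * (P i b * P j b))"
    by (rule sum.cong[OF refl], rule swap3)
  also have "\<dots> = (\<Sum>a<M. \<Sum>b<M. \<Sum>i<N. \<Sum>j<N. P i a * P j a * (P i b * P j b))"
    by (rule swap3)
  also have "\<dots> = (\<Sum>a<M. \<Sum>b<M. (\<Sum>i<N. P i a * P i b)\<^sup>2)"
    by (simp add: power2_eq_square sum_product mult_ac)
  finally show ?thesis .
qed

lemma sq_delta:
  fixes X :: "nat \<Rightarrow> nat \<Rightarrow> real"
  shows "(\<Sum>i<N. \<Sum>j<N. (X i j - (if i = j then 1 else 0))\<^sup>2) =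
         (\<Sum>i<N. \<Sum>j<N. (X i j)\<^sup>2) - 2 * (\<Sum>i<N. X i i) + N"
proof -
  have "\<And>i j. (X i j - (if i = j then 1 else 0))\<^sup>2 =
        (X i j)\<^sup>2 - 2 * (if i = j then X i i else 0) + (if i = j then 1 else 0)"
    by (auto simp: power2_eq_square algebra_simps)
  then have "(\<Sum>i<N. \<Sum>j<N. (X i j - (if i = j then 1 else 0))\<^sup>2) =
     (\<Sum>i<N. \<Sum>j<N. (X i j)\<^sup>2 - 2 * (if i = j then X i i else 0) + (if i = j then 1 else 0))"
    by simp
  also have "\<dots> = (\<Sum>i<N. (\<Sum>j<N. (X i j)\<^sup>2) - 2 * X i i + 1)"
    by (simp add: sum.distrib sum_subtractf sum_distrib_left[symmetric] sum.delta)
  also have "\<dots> = (\<Sum>i<N. \<Sum>j<N. (X i j)\<^sup>2) - 2 * (\<Sum>i<N. X i i) + N"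
    by (simp add: sum.distrib sum_subtractf sum_distrib_left)
  finally show ?thesis .
qed

lemma frob:
  fixes P :: "nat \<Rightarrow> nat \<Rightarrow> real"
  shows "(\<Sum>i<N. \<Sum>j<N. ((\<Sum>a<N. P i a * P j a) - (if i = j then 1 else 0))\<^sup>2) =
         (\<Sum>a<N. \<Sum>b<N. ((\<Sum>i<N. P i a * P i b) - (if a = b then 1 else 0))\<^sup>2)"
proof -
  have tr: "(\<Sum>i<N. \<Sum>a<N. P i a * P i a) = (\<Sum>a<N. \<Sum>i<N. P i a * P i a)"
    by (rule sum.swap)
  show ?thesis
    unfolding sq_delta[where X="\<lambda>i j. \<Sum>a<N. P i a * P j a"] sq_delta[where X="\<lambda>a b. \<Sum>i<N. P i a * P i b"]
    using frob_aux[of P N N] tr by simp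
qed

lemma rows_orthonormal:
  fixes U :: "nat \<Rightarrow> nat \<Rightarrow> real"
  assumes "\<forall>a<n. \<forall>b<n. (\<Sum>i<n. U i a * U i b) = (if a = b then 1 else 0)"
  shows "\<forall>i<n. \<forall>j<n. (\<Sum>a<n. U i a * U j a) = (if i = j then 1 else 0)"
proof -
  have "(\<Sum>a<n. \<Sum>b<n. ((\<Sum>i<n. U i a * U i b) - (if a = b then 1 else 0))\<^sup>2) = 0"
    using assms by simp
  then have 0: "(\<Sum>i<n. \<Sum>j<n. ((\<Sum>a<n. U i a * U j a) - (if i = j then 1 else 0))\<^sup>2) = 0"
    using frob[of U n] by simp
  show ?thesis
  proof (intro allI impI)
    fix i j assume ij: "i < n" "j < n"
    have "(\<Sum>j<n. ((\<Sum>a<n. U i a * U j a) - (if i = j then 1 else 0))\<^sup>2) = 0"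
      using 0 ij(1) by (subst (asm) sum_nonneg_eq_0_iff) (auto intro: sum_nonneg)
    then have "((\<Sum>a<n. U i a * U j a) - (if i = j then 1 else 0))\<^sup>2 = 0"
      using ij(2) by (subst (asm) sum_nonneg_eq_0_iff) auto
    then show "(\<Sum>a<n. U i a * U j a) = (if i = j then 1 else 0)" by simp
  qed
qed

lemma expansion:
  fixes U :: "nat \<Rightarrow> nat \<Rightarrow> real"
  assumes rows: "\<forall>i<n. \<forall>j<n. (\<Sum>a<n. U i a * U j a) = (if i = j then 1 else 0)"
    and j: "j < n"
  shows "(\<Sum>a<n. U j a * (\<Sum>i<n. U i a * e i)) = e j"
proof -
  have "(\<Sum>a<n. U j a * (\<Sum>i<n. U i a * e i)) = (\<Sum>a<n. \<Sum>i<n. e i * (U j a * U i a))"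
    by (simp add: sum_distrib_left mult_ac)
  also have "\<dots> = (\<Sum>i<n. e i * (\<Sum>a<n. U j a * U i a))"
    by (subst sum.swap) (simp add: sum_distrib_left)
  also have "\<dots> = (\<Sum>i<n. if j = i then e i else 0)"
    using rows j by (intro sum.cong) auto
  also have "\<dots> = e j" using j by (simp add: sum.delta)
  finally show ?thesis .
qed

lemma parseval:
  fixes U :: "nat \<Rightarrow> nat \<Rightarrow> real"
  assumes rows: "\<forall>i<n. \<forall>j<n. (\<Sum>a<n. U i a * U j a) = (if i = j then 1 else 0)"
  shows "(\<Sum>a<n. (\<Sum>i<n. U i a * e i)\<^sup>2) = (\<Sum>i<n. (e i)\<^sup>2)"
proof -
  have "(\<Sum>a<n. (\<Sum>i<n. U i a * e i)\<^sup>2) = (\<Sum>a<n. (\<Sum>j<n. U j a * e j) * (\<Sum>i<n. U i a * e i))"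
    by (simp add: power2_eq_square)
  also have "\<dots> = (\<Sum>a<n. \<Sum>j<n. e j * (U j a * (\<Sum>i<n. U i a * e i)))"
    by (simp add: sum_distrib_right mult_ac)
  also have "\<dots> = (\<Sum>j<n. e j * (\<Sum>a<n. U j a * (\<Sum>i<n. U i a * e i)))"
    by (subst sum.swap) (simp add: sum_distrib_left)
  also have "\<dots> = (\<Sum>j<n. e j * e j)"
    using expansion[OF rows] by (intro sum.cong) auto
  finally show ?thesis by (simp add: power2_eq_square)
qed

lemma spectral_qf:
  fixes U L :: "nat \<Rightarrow> nat \<Rightarrow> real"
  assumes rows: "\<forall>i<n. \<forall>j<n. (\<Sum>a<n. U i a * U j a) = (if i = j then 1 else 0)"
    and eig: "\<forall>a<n. \<forall>i<n. (\<Sum>j<n. L i j * U j a) = lam a * U i a"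
  shows "(\<Sum>i<n. e i * (\<Sum>j<n. L i j * e j)) = (\<Sum>a<n. lam a * (\<Sum>i<n. U i a * e i)\<^sup>2)"
proof -
  define c where "c a = (\<Sum>i<n. U i a * e i)" for a
  have Le: "(\<Sum>j<n. L i j * e j) = (\<Sum>a<n. c a * lam a * U i a)" if i: "i < n" for i
  proof -
    have "(\<Sum>j<n. L i j * e j) = (\<Sum>j<n. L i j * (\<Sum>a<n. U j a * c a))"
      using expansion[OF rows] unfolding c_def by (intro sum.cong) auto
    also have "\<dots> = (\<Sum>a<n. c a * (\<Sum>j<n. L i j * U j a))"
      by (simp add: sum_distrib_left mult_ac) (subst sum.swap, simp)
    also have "\<dots> = (\<Sum>a<n. c a * lam a * U i a)"
      using eig i by (intro sum.cong) auto
    finally show ?thesis .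
  qed
  have "(\<Sum>i<n. e i * (\<Sum>j<n. L i j * e j)) = (\<Sum>i<n. e i * (\<Sum>a<n. c a * lam a * U i a))"
    using Le by (intro sum.cong) auto
  also have "\<dots> = (\<Sum>a<n. c a * lam a * (\<Sum>i<n. U i a * e i))"
    by (simp add: sum_distrib_left mult_ac) (subst sum.swap, simp)
  also have "\<dots> = (\<Sum>a<n. lam a * (\<Sum>i<n. U i a * e i)\<^sup>2)"
    unfolding c_def by (simp add: power2_eq_square mult_ac)
  finally show ?thesis .
qed

lemma lap_qf:
  fixes Af :: "nat \<Rightarrow> nat \<Rightarrow> real"
  assumes sym: "\<And>i j. Af i j = Af j i"
  shows "(\<Sum>i<n. f i * (\<Sum>j<n. ((if i = j then (\<Sum>m<n. Af i m) else 0) - Af i j) * f j))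
       = (\<Sum>i<n. \<Sum>j<n. Af i j * (f i - f j)\<^sup>2) / 2"
proof -
  have a: "(\<Sum>j<n. ((if i = j then (\<Sum>m<n. Af i m) else 0) - Af i j) * f j)
        = (\<Sum>m<n. Af i m) * f i - (\<Sum>j<n. Af i j * f j)" if "i < n" for i
    using that by (simp add: left_diff_distrib sum_subtractf if_distrib[where f="\<lambda>x. x * _"] sum.delta cong: if_cong)
  have lhs: "(\<Sum>i<n. f i * (\<Sum>j<n. ((if i = j then (\<Sum>m<n. Af i m) else 0) - Af i j) * f j))
      = (\<Sum>i<n. \<Sum>j<n. Af i j * (f i)\<^sup>2) - (\<Sum>i<n. \<Sum>j<n. Af i j * f i * f j)"
    using a by (simp add: right_diff_distrib sum_subtractf sum_distrib_left sum_distrib_right power2_eq_square mult_ac)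
  have sw: "(\<Sum>i<n. \<Sum>j<n. Af i j * (f j)\<^sup>2) = (\<Sum>i<n. \<Sum>j<n. Af i j * (f i)\<^sup>2)"
    by (subst sum.swap) (simp add: sym)
  have "(\<Sum>i<n. \<Sum>j<n. Af i j * (f i - f j)\<^sup>2) =
     (\<Sum>i<n. \<Sum>j<n. Af i j * (f i)\<^sup>2) + (\<Sum>i<n. \<Sum>j<n. Af i j * (f j)\<^sup>2) - 2 * (\<Sum>i<n. \<Sum>j<n. Af i j * f i * f j)"
    by (simp add: power2_eq_square algebra_simps sum.distrib sum_subtractf sum_distrib_left)
  then show ?thesis using lhs sw by simp
qed

lemma kyfan:
  fixes lam p :: "nat \<Rightarrow> real"
  assumes mono: "\<forall>a b. a \<le> b \<longrightarrow> b < n \<longrightarrow> lam a \<le> lam b"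
    and p: "\<forall>a<n. 0 \<le> p a \<and> p a \<le> 1" and ps: "(\<Sum>a<n. p a) = real k" and kn: "k \<le> n"
  shows "(\<Sum>a<k. lam a) \<le> (\<Sum>a<n. lam a * p a)"
proof (cases "k = 0")
  case True
  then have "(\<Sum>a<n. p a) = 0" using ps by simp
  then have "\<forall>a<n. p a = 0" using sum_nonneg_eq_0_iff[of "{..<n}" p] p by auto
  then show ?thesis using True by simp
next
  case False
  define mu where "mu = lam (k - 1)"
  have split: "{..<n} = {..<k} \<union> {k..<n}" using kn by auto
  have s1: "(\<Sum>a<n. lam a * p a) = (\<Sum>a<k. lam a * p a) + (\<Sum>a\<in>{k..<n}. lam a * p a)"
    by (subst split, rule sum.union_disjoint) auto
  have s2: "(\<Sum>a<n. p a) = (\<Sum>a<k. p a) + (\<Sum>a\<in>{k..<n}. p a)"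
    by (subst split, rule sum.union_disjoint) auto
  have b1: "lam a * p a - lam a \<ge> mu * p a - mu" if "a < k" for a
  proof -
    have "lam a \<le> mu" unfolding mu_def using mono that kn False by auto
    moreover have "p a \<le> 1" using p that kn by auto
    ultimately have "(mu - lam a) * (1 - p a) \<ge> 0" by simp
    then show ?thesis by (simp add: algebra_simps)
  qed
  have b2: "lam a * p a \<ge> mu * p a" if "a \<in> {k..<n}" for a
  proof -
    have "mu \<le> lam a" unfolding mu_def using mono that False by auto
    moreover have "p a \<ge> 0" using p that by auto
    ultimately show ?thesis by (simp add: mult_right_mono)
  qed
  have "(\<Sum>a<k. lam a * p a - lam a) \<ge> (\<Sum>a<k. mu * p a - mu)"
    using b1 by (intro sum_mono) auto
  moreover have "(\<Sum>a\<in>{k..<n}. lam a * p a) \<ge> (\<Sum>a\<in>{k..<n}. mu * p a)"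
    using b2 by (intro sum_mono) auto
  ultimately have "(\<Sum>a<n. lam a * p a) - (\<Sum>a<k. lam a) \<ge> mu * (\<Sum>a<n. p a) - mu * k"
    using s1 s2 by (simp add: sum_subtractf sum_distrib_left algebra_simps)
  then show ?thesis using ps by simp
qed

lemma path_bound:
  fixes f :: "nat \<Rightarrow> real" and B :: real
  assumes fin: "finite J" and B: "0 \<le> B"
    and edge: "\<forall>u\<in>J. \<forall>v\<in>J. E u v \<longrightarrow> \<bar>f u - f v\<bar> \<le> B"
    and conn: "\<forall>S. S \<subseteq> J \<longrightarrow> S \<noteq> {} \<longrightarrow> S \<noteq> J \<longrightarrow> (\<exists>u\<in>S. \<exists>v\<in>J - S. E u v)"
    and i: "i \<in> J" and j: "j \<in> J"
  shows "\<bar>f i - f j\<bar> \<le> card J * B"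
proof -
  define R where "R t = {v\<in>J. \<bar>f i - f v\<bar> \<le> real t * B}" for t :: nat
  have Rsub: "R t \<subseteq> J" for t unfolding R_def by auto
  have Rfin: "finite (R t)" for t using finite_subset[OF Rsub fin] .
  have Rmono: "R t \<subseteq> R (Suc t)" for t
  proof
    fix v assume "v \<in> R t"
    moreover have "real t * B \<le> real (Suc t) * B" using B by (simp add: mult_right_mono)
    ultimately show "v \<in> R (Suc t)" unfolding R_def by auto
  qed
  have claim: "min (t + 1) (card J) \<le> card (R t)" for t
  proof (induction t)
    case 0
    have "i \<in> R 0" using i unfolding R_def by simp
    then have "card (R 0) \<ge> 1" using Rfin[of 0] by (metis One_nat_def Suc_leI card_gt_0_iff empty_iff)
    then show ?case by simp
  next
    case (Suc t)
    show ?case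
    proof (cases "R t = J")
      case True
      then have "card J \<le> card (R (Suc t))" using card_mono[OF Rfin Rmono[of t]] by simp
      then show ?thesis by simp
    next
      case False
      have "i \<in> R t" using i B unfolding R_def by simp
      then obtain u v where u: "u \<in> R t" and v: "v \<in> J - R t" and uv: "E u v"
        using conn Rsub[of t] False by blast
      have "\<bar>f i - f v\<bar> \<le> \<bar>f i - f u\<bar> + \<bar>f u - f v\<bar>" by linarith
      also have "\<dots> \<le> real t * B + B" using u v uv edge unfolding R_def by (auto intro: add_mono)
      finally have "v \<in> R (Suc t)" using v unfolding R_def by (simp add: algebra_simps)
      then have "R t \<subset> R (Suc t)" using v Rmono[of t] by auto
      then have "card (R t) < card (R (Suc t))" using Rfin by (intro psubset_card_mono) auto
      then show ?thesis using Suc.IH by simp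
    qed
  qed
  have "card J \<le> card (R (card J))" using claim[of "card J"] by simp
  then have "R (card J) = J" using card_subset_eq[OF fin Rsub] card_mono[OF fin Rsub[of "card J"]] by simp
  then show ?thesis using j unfolding R_def by auto
qed

lemma sq_diff_le: fixes x y :: real shows "(x - y)\<^sup>2 \<le> 2 * (x\<^sup>2 + y\<^sup>2)"
proof -
  have "0 \<le> (x + y)\<^sup>2" by simp
  then show ?thesis by (simp add: power2_eq_square algebra_simps)
qed
lemma quad_arith:
  fixes x y g1 g2 g3 rh :: real
  assumes "g1 \<ge> 1 - rh" "g2 \<ge> 1 - rh" "g3 \<le> rh" "0 \<le> rh" "0 < x" "0 < y"
  shows "x\<^sup>2 * g1 + y\<^sup>2 * g2 - 2 * x * y * g3 \<ge> (1 - 2 * rh) * (x\<^sup>2 + y\<^sup>2)"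
proof -
  have "0 \<le> (x - y)\<^sup>2" by simp
  then have s: "2 * x * y \<le> x\<^sup>2 + y\<^sup>2" by (simp add: power2_eq_square algebra_simps)
  have "2 * x * y * g3 \<le> 2 * x * y * rh" using assms by (intro mult_left_mono) auto
  also have "\<dots> \<le> (x\<^sup>2 + y\<^sup>2) * rh" using s assms by (intro mult_right_mono) auto
  finally have a: "2 * x * y * g3 \<le> rh * (x\<^sup>2 + y\<^sup>2)" by (simp add: mult.commute)
  have b: "x\<^sup>2 * g1 \<ge> x\<^sup>2 * (1 - rh)" "y\<^sup>2 * g2 \<ge> y\<^sup>2 * (1 - rh)"
    using assms by (auto intro: mult_left_mono)
  show ?thesis using a b by (simp add: algebra_simps)
qed
lemma sqrt_ge_self: fixes t :: real assumes "0 \<le> t" "t \<le> 1" shows "t \<le> sqrt t"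
proof -
  have "t * t \<le> t" using assms by (simp add: mult_left_le_one_le)
  then have "sqrt (t * t) \<le> sqrt t" by (rule real_sqrt_le_mono)
  then show ?thesis using assms by simp
qed

locale spec_setting =
  fixes n k :: nat and cl :: "nat \<Rightarrow> nat" and Af U :: "nat \<Rightarrow> nat \<Rightarrow> real"
    and lam :: "nat \<Rightarrow> real" and w eps :: real and E :: "nat \<Rightarrow> nat \<Rightarrow> nat \<Rightarrow> bool"
  assumes cl_lt: "\<And>i. i < n \<Longrightarrow> cl i < k"
    and cl_ne: "\<And>l. l < k \<Longrightarrow> \<exists>i<n. cl i = l"
    and sym: "\<And>i j. Af i j = Af j i"
    and Af_nn: "\<And>i j. 0 \<le> Af i j"
    and onb: "\<forall>a<n. \<forall>b<n. (\<Sum>i<n. U i a * U i b) = (if a = b then 1 else 0)"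
    and eig: "\<forall>a<n. \<forall>i<n. (\<Sum>j<n. ((if i = j then (\<Sum>m<n. Af i m) else 0) - Af i j) * U j a) = lam a * U i a"
    and mono: "\<forall>a b. a \<le> b \<longrightarrow> b < n \<longrightarrow> lam a \<le> lam b"
    and w_pos: "0 < w" and eps_nn: "0 \<le> eps"
    and cross: "\<And>i j. i < n \<Longrightarrow> j < n \<Longrightarrow> cl i \<noteq> cl j \<Longrightarrow> Af i j \<le> eps * w"
    and within: "\<And>l i j. l < k \<Longrightarrow> i < n \<Longrightarrow> j < n \<Longrightarrow> cl i = l \<Longrightarrow> cl j = l \<Longrightarrow> E l i j \<Longrightarrow> w \<le> Af i j"
    and conn: "\<And>l S. l < k \<Longrightarrow> S \<subseteq> {i. i < n \<and> cl i = l} \<Longrightarrow> S \<noteq> {} \<Longrightarrow> S \<noteq> {i. i < n \<and> cl i = l}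
                 \<Longrightarrow> \<exists>u\<in>S. \<exists>v\<in>{i. i < n \<and> cl i = l} - S. E l u v"
begin

definition Lm where "Lm i j = (if i = j then (\<Sum>m<n. Af i m) else 0) - Af i j"
definition I where "I l = {i. i < n \<and> cl i = l}"
definition m where "m l = card (I l)"

lemma rows: "\<forall>i<n. \<forall>j<n. (\<Sum>a<n. U i a * U j a) = (if i = j then 1 else 0)"
  using rows_orthonormal[OF onb] .

lemma eig': "\<forall>a<n. \<forall>i<n. (\<Sum>j<n. Lm i j * U j a) = lam a * U i a"
  using eig unfolding Lm_def by simp

lemma qf: "(\<Sum>i<n. f i * (\<Sum>j<n. Lm i j * f j)) = (\<Sum>i<n. \<Sum>j<n. Af i j * (f i - f j)\<^sup>2) / 2"
  unfolding Lm_def using lap_qf[of Af f n] sym by simp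

lemma lam_eq: assumes "a < n" shows "lam a = (\<Sum>i<n. \<Sum>j<n. Af i j * (U i a - U j a)\<^sup>2) / 2"
proof -
  have "(\<Sum>i<n. U i a * (\<Sum>j<n. Lm i j * U j a)) = (\<Sum>i<n. lam a * (U i a * U i a))"
    using eig' assms by (intro sum.cong) auto
  also have "\<dots> = lam a" using onb assms by (simp add: sum_distrib_left[symmetric])
  finally show ?thesis using qf[of "\<lambda>i. U i a"] by simp
qed

lemma lam_nn: assumes "a < n" shows "0 \<le> lam a"
  unfolding lam_eq[OF assms] by (intro divide_nonneg_pos sum_nonneg mult_nonneg_nonneg Af_nn) auto

lemma pair_le:
  fixes g :: "nat \<Rightarrow> nat \<Rightarrow> real"
  assumes nn: "\<And>i j. 0 \<le> g i j" and ij: "i < n" "j < n" "i \<noteq> j"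
  shows "g i j + g j i \<le> (\<Sum>i<n. \<Sum>j<n. g i j)"
proof -
  have "g i j \<le> (\<Sum>j<n. g i j)" using ij nn by (intro member_le_sum) auto
  moreover have "g j i \<le> (\<Sum>i<n. g j i)" using ij nn by (intro member_le_sum) auto
  ultimately have "g i j + g j i \<le> (\<Sum>i'\<in>{i,j}. \<Sum>j<n. g i' j)" using ij by simp
  also have "\<dots> \<le> (\<Sum>i<n. \<Sum>j<n. g i j)" using ij nn by (intro sum_mono2) (auto intro: sum_nonneg)
  finally show ?thesis .
qed

lemma edge_bound:
  assumes a: "a < n" and ij: "i < n" "j < n" and wA: "w \<le> Af i j"
  shows "w * (U i a - U j a)\<^sup>2 \<le> lam a"
proof (cases "i = j")
  case True then show ?thesis using lam_nn[OF a] by simp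
next
  case False
  have "w * (U i a - U j a)\<^sup>2 \<le> Af i j * (U i a - U j a)\<^sup>2" using wA by (simp add: mult_right_mono)
  also have "\<dots> = (Af i j * (U i a - U j a)\<^sup>2 + Af j i * (U j a - U i a)\<^sup>2) / 2"
    by (simp add: sym power2_commute)
  also have "\<dots> \<le> (\<Sum>i<n. \<Sum>j<n. Af i j * (U i a - U j a)\<^sup>2) / 2"
    using pair_le[of "\<lambda>i j. Af i j * (U i a - U j a)\<^sup>2" i j] ij False Af_nn
    by (simp add: divide_right_mono)
  finally show ?thesis using lam_eq[OF a] by simp
qed


lemma part_sum: "(\<Sum>i<n. g i) = (\<Sum>l<k. \<Sum>i\<in>I l. g i)"
proof -
  have "(\<Sum>l<k. sum g {i \<in> {..<n}. cl i = l}) = sum g {..<n}"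
    by (rule sum.group) (auto intro: cl_lt)
  moreover have "{i \<in> {..<n}. cl i = l} = I l" for l unfolding I_def by auto
  ultimately show ?thesis by simp
qed

lemma I_fin: "finite (I l)" unfolding I_def by auto
lemma I_sub: "I l \<subseteq> {..<n}" unfolding I_def by auto

lemma m_pos: "l < k \<Longrightarrow> 1 \<le> m l"
  using cl_ne[of l] I_fin[of l] unfolding m_def I_def
  by (metis (mono_tags, lifting) One_nat_def Suc_leI card_gt_0_iff empty_iff mem_Collect_eq)

lemma m_le: "m l \<le> n" unfolding m_def using card_mono[OF _ I_sub] by auto

lemma n_sum: "real n = (\<Sum>l<k. real (m l))"
  using part_sum[of "\<lambda>i. 1::real"] unfolding m_def by simp

lemma k_le_n: "k \<le> n"
proof -
  have "real k = (\<Sum>l<k. 1::real)" by simp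
  also have "\<dots> \<le> (\<Sum>l<k. real (m l))" using m_pos by (intro sum_mono) auto
  finally show ?thesis using n_sum by simp
qed

lemma cluster_diff:
  assumes l: "l < k" and ij: "i \<in> I l" "j \<in> I l" and a: "a < n"
  shows "\<bar>U i a - U j a\<bar> \<le> n * sqrt (lam a / w)"
proof -
  have edge: "\<forall>u\<in>I l. \<forall>v\<in>I l. E l u v \<longrightarrow> \<bar>U u a - U v a\<bar> \<le> sqrt (lam a / w)"
  proof (intro ballI impI)
    fix u v assume uv: "u \<in> I l" "v \<in> I l" "E l u v"
    have "w * (U u a - U v a)\<^sup>2 \<le> lam a"
      using uv within[OF l] a by (intro edge_bound) (auto simp: I_def)
    then have "(U u a - U v a)\<^sup>2 \<le> lam a / w" using w_pos by (simp add: field_simps mult.commute)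
    then show "\<bar>U u a - U v a\<bar> \<le> sqrt (lam a / w)" using real_le_rsqrt by (metis real_sqrt_abs real_sqrt_le_mono)
  qed
  have conn': "\<forall>S. S \<subseteq> I l \<longrightarrow> S \<noteq> {} \<longrightarrow> S \<noteq> I l \<longrightarrow> (\<exists>u\<in>S. \<exists>v\<in>I l - S. E l u v)"
    using conn[OF l] unfolding I_def by blast
  have "\<bar>U i a - U j a\<bar> \<le> card (I l) * sqrt (lam a / w)"
    by (rule path_bound[OF I_fin _ edge conn' ij]) (simp add: lam_nn[OF a] w_pos less_imp_le)
  also have "\<dots> \<le> n * sqrt (lam a / w)"
    using m_le[of l] unfolding m_def by (intro mult_right_mono) (auto simp: lam_nn[OF a] w_pos less_imp_le)
  finally show ?thesis .
qed


definition e where "e l i = (if cl i = l then 1 / sqrt (m l) else 0)"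

lemma sum_I: "(\<Sum>i<n. if cl i = l then g i else 0) = (\<Sum>i\<in>I l. g i)"
proof -
  have "(\<Sum>i<n. if cl i = l then g i else 0) = sum g {i \<in> {..<n}. cl i = l}"
    by (rule sum.inter_filter[symmetric]) simp
  moreover have "{i \<in> {..<n}. cl i = l} = I l" unfolding I_def by auto
  ultimately show ?thesis by simp
qed

lemma e_norm: assumes l: "l < k" shows "(\<Sum>i<n. (e l i)\<^sup>2) = 1"
proof -
  have "(\<Sum>i<n. (e l i)\<^sup>2) = (\<Sum>i<n. if cl i = l then 1 / real (m l) else 0)"
    unfolding e_def using m_pos[OF l] by (intro sum.cong) (auto simp: power_divide)
  also have "\<dots> = real (m l) * (1 / real (m l))" unfolding sum_I m_def by simp
  also have "\<dots> = 1" using m_pos[OF l] by simp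
  finally show ?thesis .
qed

lemma c_eq: "(\<Sum>i<n. U i a * e l i) = (\<Sum>i\<in>I l. U i a) / sqrt (m l)"
proof -
  have "(\<Sum>i<n. U i a * e l i) = (\<Sum>i<n. if cl i = l then U i a / sqrt (m l) else 0)"
    unfolding e_def by (intro sum.cong) auto
  also have "\<dots> = (\<Sum>i\<in>I l. U i a) / sqrt (m l)" unfolding sum_I by (simp add: sum_divide_distrib)
  finally show ?thesis .
qed

lemma c_sq_le: assumes l: "l < k" shows "(\<Sum>i<n. U i a * e l i)\<^sup>2 \<le> (\<Sum>i\<in>I l. (U i a)\<^sup>2)"
proof -
  have cs: "(\<Sum>i\<in>I l. 1 * U i a)\<^sup>2 \<le> (\<Sum>i\<in>I l. 1\<^sup>2) * (\<Sum>i\<in>I l. (U i a)\<^sup>2)"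
    by (rule Cauchy_Schwarz_ineq_sum)
  have mp: "(0::real) < m l" using m_pos[OF l] by simp
  have "(\<Sum>i<n. U i a * e l i)\<^sup>2 = (\<Sum>i\<in>I l. U i a)\<^sup>2 / m l"
    unfolding c_eq using mp by (simp add: power_divide)
  also have "\<dots> \<le> (\<Sum>i\<in>I l. (U i a)\<^sup>2)"
    using cs mp unfolding m_def by (simp add: divide_le_eq mult.commute)
  finally show ?thesis .
qed

definition p where "p a = (\<Sum>l<k. (\<Sum>i<n. U i a * e l i)\<^sup>2)"

lemma p_le: assumes a: "a < n" shows "p a \<le> 1"
proof -
  have "p a \<le> (\<Sum>l<k. \<Sum>i\<in>I l. (U i a)\<^sup>2)" unfolding p_def using c_sq_le by (intro sum_mono) auto
  also have "\<dots> = (\<Sum>i<n. U i a * U i a)" unfolding part_sum[symmetric] by (simp add: power2_eq_square)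
  also have "\<dots> = 1" using onb a by simp
  finally show ?thesis .
qed

lemma p_nn: "0 \<le> p a" unfolding p_def by (intro sum_nonneg) auto

lemma p_sum: "(\<Sum>a<n. p a) = real k"
proof -
  have "(\<Sum>a<n. p a) = (\<Sum>l<k. \<Sum>a<n. (\<Sum>i<n. U i a * e l i)\<^sup>2)" unfolding p_def by (rule sum.swap)
  also have "\<dots> = (\<Sum>l<k. (\<Sum>i<n. (e l i)\<^sup>2))" using parseval[OF rows] by simp
  also have "\<dots> = (\<Sum>l<k. 1)" using e_norm by (intro sum.cong) auto
  finally show ?thesis by simp
qed

lemma sq_diff_sum: "(\<Sum>i<n. \<Sum>j<n. (f i - f j)\<^sup>2) = 2 * real n * (\<Sum>i<n. (f i)\<^sup>2) - 2 * (\<Sum>i<n. f i)\<^sup>2"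
proof -
  have "(\<Sum>i<n. \<Sum>j<n. (f i - f j)\<^sup>2) = (\<Sum>i<n. \<Sum>j<n. (f i)\<^sup>2 + (f j)\<^sup>2 - 2 * (f i * f j))"
    by (simp add: power2_eq_square algebra_simps)
  also have "\<dots> = (\<Sum>i<n. \<Sum>j<n. (f i)\<^sup>2) + (\<Sum>i<n. \<Sum>j<n. (f j)\<^sup>2) - 2 * (\<Sum>i<n. \<Sum>j<n. f i * f j)"
    by (simp only: sum.distrib sum_subtractf sum_distrib_left)
  also have "(\<Sum>i<n. \<Sum>j<n. f i * f j) = (\<Sum>i<n. f i)\<^sup>2"
    by (simp only: power2_eq_square sum_product)
  also have "(\<Sum>i<n. \<Sum>j<n. (f i)\<^sup>2) = real n * (\<Sum>i<n. (f i)\<^sup>2)" by (simp add: sum_distrib_left)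
  also have "(\<Sum>i<n. \<Sum>j<n. (f j)\<^sup>2) = real n * (\<Sum>i<n. (f i)\<^sup>2)" by simp
  finally show ?thesis by simp
qed

lemma eLe: assumes l: "l < k" shows "(\<Sum>i<n. e l i * (\<Sum>j<n. Lm i j * e l j)) \<le> eps * w * n"
proof -
  have t: "Af i j * (e l i - e l j)\<^sup>2 \<le> eps * w * (e l i - e l j)\<^sup>2" if "i < n" "j < n" for i j
  proof (cases "cl i = cl j")
    case True then show ?thesis unfolding e_def by simp
  next
    case False then show ?thesis using cross[OF that False] by (simp add: mult_right_mono)
  qed
  have "(\<Sum>i<n. e l i * (\<Sum>j<n. Lm i j * e l j)) = (\<Sum>i<n. \<Sum>j<n. Af i j * (e l i - e l j)\<^sup>2) / 2"
    by (rule qf)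
  also have "\<dots> \<le> (\<Sum>i<n. \<Sum>j<n. eps * w * (e l i - e l j)\<^sup>2) / 2"
    using t by (intro divide_right_mono sum_mono) auto
  also have "\<dots> = eps * w * ((\<Sum>i<n. \<Sum>j<n. (e l i - e l j)\<^sup>2) / 2)"
    by (simp add: sum_distrib_left)
  also have "\<dots> \<le> eps * w * n"
  proof -
    have "(\<Sum>i<n. \<Sum>j<n. (e l i - e l j)\<^sup>2) / 2 \<le> n"
      unfolding sq_diff_sum[of "e l"] e_norm[OF l] by simp
    then show ?thesis using eps_nn w_pos by (intro mult_left_mono) auto
  qed
  finally show ?thesis .
qed

lemma lam_sum: "(\<Sum>a<k. lam a) \<le> real k * real n * eps * w"
proof -
  have "(\<Sum>a<k. lam a) \<le> (\<Sum>a<n. lam a * p a)"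
    by (rule kyfan[OF mono _ p_sum k_le_n]) (auto intro: p_le p_nn)
  also have "\<dots> = (\<Sum>l<k. \<Sum>a<n. lam a * (\<Sum>i<n. U i a * e l i)\<^sup>2)"
    unfolding p_def by (simp add: sum_distrib_left) (rule sum.swap)
  also have "\<dots> = (\<Sum>l<k. (\<Sum>i<n. e l i * (\<Sum>j<n. Lm i j * e l j)))"
    using spectral_qf[OF rows eig'] by simp
  also have "\<dots> \<le> (\<Sum>l<k. eps * w * n)" using eLe by (intro sum_mono) auto
  finally show ?thesis by (simp add: mult_ac)
qed


definition mu where "mu a l = (\<Sum>i\<in>I l. U i a) / m l"
definition r where "r a i = U i a - mu a (cl i)"
definition c where "c a l = sqrt (m l) * mu a l"
definition rho where "rho = (\<Sum>a<k. \<Sum>i<n. (r a i)\<^sup>2)"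

lemma I_mem: "i \<in> I l \<longleftrightarrow> i < n \<and> cl i = l" unfolding I_def by simp

lemma r_bound: assumes a: "a < n" and i: "i < n" shows "\<bar>r a i\<bar> \<le> n * sqrt (lam a / w)"
proof -
  define l where "l = cl i"
  have l: "l < k" using cl_lt[OF i] l_def by simp
  have il: "i \<in> I l" using i l_def I_mem by simp
  have mp: "(0::real) < m l" using m_pos[OF l] by simp
  have "r a i = (\<Sum>j\<in>I l. U i a - U j a) / m l"
    unfolding r_def mu_def l_def[symmetric] using mp
    by (simp add: sum_subtractf m_def field_simps)
  also have "\<bar>\<dots>\<bar> \<le> (\<Sum>j\<in>I l. \<bar>U i a - U j a\<bar>) / m l"
    using mp by (simp add: divide_right_mono sum_abs)
  also have "\<dots> \<le> (\<Sum>j\<in>I l. n * sqrt (lam a / w)) / m l"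
    using cluster_diff[OF l il _ a] mp by (intro divide_right_mono sum_mono) auto
  also have "\<dots> = n * sqrt (lam a / w)" using mp by (simp add: m_def)
  finally show ?thesis .
qed

lemma r_sq_bound: assumes a: "a < n" and i: "i < n" shows "(r a i)\<^sup>2 \<le> (real n)\<^sup>2 * (lam a / w)"
proof -
  have "(r a i)\<^sup>2 = \<bar>r a i\<bar>\<^sup>2" by simp
  also have "\<dots> \<le> (n * sqrt (lam a / w))\<^sup>2" using r_bound[OF a i] by (intro power_mono) auto
  also have "\<dots> = (real n)\<^sup>2 * (lam a / w)" using lam_nn[OF a] w_pos by (simp add: power_mult_distrib)
  finally show ?thesis .
qed

lemma r_sum: "(\<Sum>i\<in>I l. r a i) = 0"
proof (cases "m l = 0")
  case True
  then have "I l = {}" using I_fin unfolding m_def by simp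
  then show ?thesis by simp
next
  case False
  have "(\<Sum>i\<in>I l. r a i) = (\<Sum>i\<in>I l. U i a - mu a l)" unfolding r_def using I_mem by (intro sum.cong) auto
  also have "\<dots> = 0" unfolding mu_def using False by (simp add: sum_subtractf m_def)
  finally show ?thesis .
qed

lemma orth_decomp: assumes a: "a < n" and b: "b < n"
  shows "(\<Sum>l<k. c a l * c b l) + (\<Sum>i<n. r a i * r b i) = (if a = b then 1 else 0)"
proof -
  have blk: "(\<Sum>i\<in>I l. U i a * U i b) = c a l * c b l + (\<Sum>i\<in>I l. r a i * r b i)" for l
  proof -
    have "(\<Sum>i\<in>I l. U i a * U i b) = (\<Sum>i\<in>I l. (mu a l + r a i) * (mu b l + r b i))"
      unfolding r_def using I_mem by (intro sum.cong) auto
    also have "\<dots> = (\<Sum>i\<in>I l. mu a l * mu b l) + mu a l * (\<Sum>i\<in>I l. r b i) + mu b l * (\<Sum>i\<in>I l. r a i)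
                 + (\<Sum>i\<in>I l. r a i * r b i)"
      by (simp add: algebra_simps sum.distrib sum_distrib_left)
    also have "\<dots> = m l * (mu a l * mu b l) + (\<Sum>i\<in>I l. r a i * r b i)"
      unfolding r_sum by (simp add: m_def)
    also have "m l * (mu a l * mu b l) = c a l * c b l"
      unfolding c_def by (simp add: algebra_simps)
    finally show ?thesis .
  qed
  have "(if a = b then 1 else 0) = (\<Sum>i<n. U i a * U i b)" using onb a b by simp
  also have "\<dots> = (\<Sum>l<k. c a l * c b l + (\<Sum>i\<in>I l. r a i * r b i))" unfolding part_sum blk ..
  also have "\<dots> = (\<Sum>l<k. c a l * c b l) + (\<Sum>i<n. r a i * r b i)"
    unfolding part_sum[of "\<lambda>i. r a i * r b i"] by (simp add: sum.distrib)
  finally show ?thesis by simp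
qed

lemma rho_nn: "0 \<le> rho" unfolding rho_def by (intro sum_nonneg) auto

lemma G_bound: assumes l: "l < k" and l': "l' < k"
  shows "\<bar>(\<Sum>a<k. c a l * c a l') - (if l = l' then 1 else 0)\<bar> \<le> rho"
proof -
  define R where "R a b = (\<Sum>i<n. r a i * r b i)" for a b
  have "(\<Sum>a<k. \<Sum>b<k. ((\<Sum>l<k. c a l * c b l) - (if a = b then 1 else 0))\<^sup>2) = (\<Sum>a<k. \<Sum>b<k. (R a b)\<^sup>2)"
  proof (intro sum.cong refl)
    fix a b assume "a \<in> {..<k}" "b \<in> {..<k}"
    then have ab: "a < n" "b < n" using k_le_n by auto
    have "(\<Sum>l<k. c a l * c b l) - (if a = b then 1 else 0) = - R a b"
      using orth_decomp[OF ab] unfolding R_def by linarith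
    then show "((\<Sum>l<k. c a l * c b l) - (if a = b then 1 else 0))\<^sup>2 = (R a b)\<^sup>2" by simp
  qed
  also have "\<dots> \<le> (\<Sum>a<k. \<Sum>b<k. (\<Sum>i<n. (r a i)\<^sup>2) * (\<Sum>i<n. (r b i)\<^sup>2))"
    unfolding R_def by (intro sum_mono Cauchy_Schwarz_ineq_sum)
  also have "\<dots> = rho\<^sup>2" unfolding rho_def by (simp add: power2_eq_square sum_product)
  finally have tot: "(\<Sum>a<k. \<Sum>b<k. ((\<Sum>l<k. c a l * c b l) - (if a = b then 1 else 0))\<^sup>2) \<le> rho\<^sup>2" .
  have eq: "(\<Sum>i<k. \<Sum>j<k. ((\<Sum>a<k. c a i * c a j) - (if i = j then 1 else 0))\<^sup>2) \<le> rho\<^sup>2"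
    using tot frob[of "\<lambda>i a. c a i" k] by simp
  have "((\<Sum>a<k. c a l * c a l') - (if l = l' then 1 else 0))\<^sup>2
        \<le> (\<Sum>j<k. ((\<Sum>a<k. c a l * c a j) - (if l = j then 1 else 0))\<^sup>2)"
    using l' by (intro member_le_sum) auto
  also have "\<dots> \<le> (\<Sum>i<k. \<Sum>j<k. ((\<Sum>a<k. c a i * c a j) - (if i = j then 1 else 0))\<^sup>2)"
    using l by (intro member_le_sum[where f="\<lambda>i. \<Sum>j<k. ((\<Sum>a<k. c a i * c a j) - (if i = j then 1 else 0))\<^sup>2"]) (auto intro: sum_nonneg)
  finally have "((\<Sum>a<k. c a l * c a l') - (if l = l' then 1 else 0))\<^sup>2 \<le> rho\<^sup>2" using eq by linarith
  then show ?thesis using rho_nn by (metis abs_le_square_iff abs_of_nonneg)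
qed

lemma rho_bound: "rho \<le> real k * (real n)^4 * eps"
proof -
  have "rho \<le> (\<Sum>a<k. \<Sum>i<n. (real n)\<^sup>2 * (lam a / w))"
    unfolding rho_def using r_sq_bound k_le_n by (intro sum_mono) auto
  also have "\<dots> = (real n)^3 * ((\<Sum>a<k. lam a) / w)"
    by (simp add: sum_distrib_left sum_divide_distrib power2_eq_square power3_eq_cube mult_ac)
  also have "\<dots> \<le> (real n)^3 * ((real k * real n * eps * w) / w)"
    using lam_sum w_pos by (intro mult_left_mono divide_right_mono) auto
  also have "\<dots> = real k * (real n)^4 * eps" using w_pos by (simp add: power_numeral_reduce)
  finally show ?thesis .
qed


lemma within_bound: assumes l: "l < k" and ij: "i \<in> I l" "j \<in> I l"
  shows "(\<Sum>a<k. (U i a - U j a)\<^sup>2) \<le> (real n)\<^sup>2 * (real k * real n * eps)"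
proof -
  have "(\<Sum>a<k. (U i a - U j a)\<^sup>2) \<le> (\<Sum>a<k. (real n)\<^sup>2 * (lam a / w))"
  proof (intro sum_mono)
    fix a assume "a \<in> {..<k}"
    then have a: "a < n" using k_le_n by auto
    have "(U i a - U j a)\<^sup>2 = \<bar>U i a - U j a\<bar>\<^sup>2" by simp
    also have "\<dots> \<le> (n * sqrt (lam a / w))\<^sup>2" using cluster_diff[OF l ij a] by (intro power_mono) auto
    also have "\<dots> = (real n)\<^sup>2 * (lam a / w)" using lam_nn[OF a] w_pos by (simp add: power_mult_distrib)
    finally show "(U i a - U j a)\<^sup>2 \<le> (real n)\<^sup>2 * (lam a / w)" .
  qed
  also have "\<dots> = (real n)\<^sup>2 * ((\<Sum>a<k. lam a) / w)" by (simp add: sum_distrib_left sum_divide_distrib)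
  also have "\<dots> \<le> (real n)\<^sup>2 * ((real k * real n * eps * w) / w)"
    using lam_sum w_pos by (intro mult_left_mono divide_right_mono) auto
  also have "\<dots> = (real n)\<^sup>2 * (real k * real n * eps)" using w_pos by simp
  finally show ?thesis .
qed

lemma sep_bound: assumes l: "l < k" and l': "l' < k" and ll': "l \<noteq> l'"
  shows "(\<Sum>a<k. (mu a l - mu a l')\<^sup>2) \<ge> (1 - 2 * rho) * (1 / m l + 1 / m l')"
proof -
  define x where "x = 1 / sqrt (m l)"
  define y where "y = 1 / sqrt (m l')"
  have mp: "(0::real) < m l" "(0::real) < m l'" using m_pos[OF l] m_pos[OF l'] by auto
  have xy: "0 < x" "0 < y" using mp unfolding x_def y_def by auto
  have mux: "mu a l = c a l * x" "mu a l' = c a l' * y" for a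
    unfolding c_def x_def y_def using mp by auto
  have "(\<Sum>a<k. (mu a l - mu a l')\<^sup>2) = (\<Sum>a<k. x\<^sup>2 * (c a l * c a l) + y\<^sup>2 * (c a l' * c a l') - 2 * x * y * (c a l * c a l'))"
    unfolding mux by (intro sum.cong) (auto simp: power2_eq_square algebra_simps)
  also have "\<dots> = x\<^sup>2 * (\<Sum>a<k. c a l * c a l) + y\<^sup>2 * (\<Sum>a<k. c a l' * c a l') - 2 * x * y * (\<Sum>a<k. c a l * c a l')"
    by (simp add: sum.distrib sum_subtractf sum_distrib_left)
  also have "\<dots> \<ge> (1 - 2 * rho) * (x\<^sup>2 + y\<^sup>2)"
    using G_bound[OF l l] G_bound[OF l' l'] G_bound[OF l l'] ll' rho_nn xy
    by (intro quad_arith) (auto simp: abs_le_iff)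
  finally show ?thesis unfolding x_def y_def using mp by (simp add: power_divide)
qed

lemma cross_bound: assumes l: "l < k" and l': "l' < k" and ll': "l \<noteq> l'"
    and i: "i \<in> I l" and j: "j \<in> I l'"
  shows "L2_set (\<lambda>a. U i a - U j a) {..<k} \<ge>
           sqrt (2 / n) - 2 * sqrt (2 / n) * rho - 2 * n * sqrt (real k * real n * eps)"
proof -
  have inn: "i < n" "j < n" and cli: "cl i = l" "cl j = l'" using i j I_mem by auto
  have nn: "(0::real) < n" using inn by simp
  define D where "D a = mu a l - mu a l'" for a
  define T where "T a = r a j - r a i" for a
  have DT: "D a = (U i a - U j a) + T a" for a
    unfolding D_def T_def r_def cli by simp
  have tri: "L2_set D {..<k} \<le> L2_set (\<lambda>a. U i a - U j a) {..<k} + L2_set T {..<k}"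
    unfolding DT by (rule L2_set_triangle_ineq)
  have "(\<Sum>a<k. (T a)\<^sup>2) \<le> (\<Sum>a<k. 4 * ((real n)\<^sup>2 * (lam a / w)))"
  proof (intro sum_mono)
    fix a assume "a \<in> {..<k}"
    then have a: "a < n" using k_le_n by auto
    have "(T a)\<^sup>2 \<le> 2 * ((r a j)\<^sup>2 + (r a i)\<^sup>2)" unfolding T_def
      by (rule sq_diff_le)
    also have "\<dots> \<le> 2 * ((real n)\<^sup>2 * (lam a / w) + (real n)\<^sup>2 * (lam a / w))"
      using r_sq_bound[OF a inn(2)] r_sq_bound[OF a inn(1)] by (intro mult_left_mono add_mono) auto
    also have "\<dots> = 4 * ((real n)\<^sup>2 * (lam a / w))" by (rule arg_cong[where f="\<lambda>t. 2 * t"] | simp)+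
    finally show "(T a)\<^sup>2 \<le> 4 * ((real n)\<^sup>2 * (lam a / w))" .
  qed
  also have "\<dots> = 4 * (real n)\<^sup>2 * ((\<Sum>a<k. lam a) / w)" by (simp add: sum_distrib_left sum_divide_distrib mult_ac)
  also have "\<dots> \<le> 4 * (real n)\<^sup>2 * ((real k * real n * eps * w) / w)"
    using lam_sum w_pos by (intro mult_left_mono divide_right_mono) auto
  also have "\<dots> = (2 * n * sqrt (real k * real n * eps))\<^sup>2" using w_pos eps_nn
    by (simp add: power_mult_distrib)
  finally have "L2_set T {..<k} \<le> 2 * n * sqrt (real k * real n * eps)"
    unfolding L2_set_def using eps_nn by (intro real_le_lsqrt) auto
  moreover have "sqrt (2 / n) - 2 * sqrt (2 / n) * rho \<le> L2_set D {..<k}"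
  proof (cases "1 - 2 * rho \<ge> 0")
    case False
    then have "sqrt (2 / n) * (1 - 2 * rho) \<le> 0" by (simp add: mult_nonneg_nonpos)
    moreover have "0 \<le> L2_set D {..<k}" by (rule L2_set_nonneg)
    moreover have "sqrt (2 / n) - 2 * sqrt (2 / n) * rho = sqrt (2 / n) * (1 - 2 * rho)" by (simp add: algebra_simps)
    ultimately show ?thesis by linarith
  next
    case True
    have mpos: "(0::real) < m l" "(0::real) < m l'" using m_pos l l' by (auto intro: order_less_le_trans)
    have "1 / real (m l) \<ge> 1 / n" "1 / real (m l') \<ge> 1 / n"
      using m_le mpos nn by (auto intro!: divide_left_mono)
    then have "(1 - 2 * rho) * (2 / n) \<le> (1 - 2 * rho) * (1 / m l + 1 / m l')"
      using True by (intro mult_left_mono) auto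
    also have "\<dots> \<le> (\<Sum>a<k. (D a)\<^sup>2)" unfolding D_def by (rule sep_bound[OF l l' ll'])
    finally have "sqrt ((1 - 2 * rho) * (2 / n)) \<le> L2_set D {..<k}"
      unfolding L2_set_def by (rule real_sqrt_le_mono)
    moreover have "sqrt (2 / n) * (1 - 2 * rho) \<le> sqrt ((1 - 2 * rho) * (2 / n))"
    proof -
      have "1 - 2 * rho \<le> 1" using rho_nn by simp
      then have "(1 - 2 * rho) \<le> sqrt (1 - 2 * rho)" using True by (intro sqrt_ge_self)
      then have "sqrt (2 / n) * (1 - 2 * rho) \<le> sqrt (2 / n) * sqrt (1 - 2 * rho)"
        by (intro mult_left_mono) auto
      also have "\<dots> = sqrt ((1 - 2 * rho) * (2 / n))" by (simp only: real_sqrt_mult[symmetric] mult.commute)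
      finally show ?thesis .
    qed
    moreover have "sqrt (2 / n) - 2 * sqrt (2 / n) * rho = sqrt (2 / n) * (1 - 2 * rho)" by (simp add: algebra_simps)
    ultimately show ?thesis by linarith
  qed
  ultimately show ?thesis using tri by linarith
qed

end

lemma num_facts:
  fixes z :: real and n k :: nat
  assumes n: "1 \<le> n" and k: "1 \<le> k" and z: "15 \<le> z"
  defines "eps \<equiv> real n powr (- z / 3)"
  shows "sqrt ((real n)\<^sup>2 * (real k * real n * eps)) \<le> (real k ^ 3 / real n powr (z - 9)) powr (1/6)"
    and "2 * sqrt (2 / n) * (real k * (real n)^4 * eps) + 2 * n * sqrt (real k * real n * eps)
           \<le> 6 * (real k ^ 27 / real n powr (z - 15)) powr (1/24)"
proof -
  define q where "q = z - 15"
  have q: "0 \<le> q" using z q_def by simp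
  have np: "(0::real) < n" using n by simp
  have kp: "(0::real) < k" using k by simp
  define b where "b = real n powr (- q / 24)"
  have bp: "0 < b" unfolding b_def using np by simp
  have b1: "b \<le> 1"
  proof -
    have "1 \<le> real n powr (q / 24)" using n q by (intro ge_one_powr_ge_zero) auto
    then have "1 / real n powr (q / 24) \<le> 1" by (auto simp: divide_le_eq_1)
    then show ?thesis unfolding b_def by (simp add: powr_minus_divide)
  qed
  have b8: "b ^ 8 = real n powr (- q / 3)"
    unfolding b_def using np by (simp add: powr_realpow[symmetric] powr_powr)
  have b24: "b ^ 24 = real n powr (- q)"
    unfolding b_def using np by (simp add: powr_realpow[symmetric] powr_powr)
  have eps_eq: "eps = b ^ 8 / (real n)^5"
  proof -
    have e: "- z / 3 = - q / 3 + (- 5)" unfolding q_def by (simp add: field_simps)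
    have "eps = real n powr (- q / 3 + (- 5))" unfolding eps_def by (subst e) (rule refl)
    also have "\<dots> = real n powr (- q / 3) * real n powr (- 5)" by (rule powr_add)
    also have "\<dots> = b ^ 8 * real n powr (- 5)" unfolding b8 ..
    also have "real n powr (- 5) = 1 / (real n)^5" using np by (simp add: powr_minus powr_realpow divide_inverse)
    finally show ?thesis by simp
  qed
  have e2: "b ^ 24 = 1 / real n powr q" unfolding b24 using np by (simp add: powr_minus_divide)
  define Z where "Z = real k * b ^ 8 / (real n)\<^sup>2"
  have Zp: "0 < Z" unfolding Z_def using kp bp np by simp
  have X: "real k ^ 3 / real n powr (z - 9) = Z ^ 3"
  proof -
    have e1: "real n powr (z - 9) = real n powr q * (real n)^6"
    proof -
      have "real n powr (z - 9) = real n powr (q + 6)" unfolding q_def by (simp add: algebra_simps)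
      also have "\<dots> = real n powr q * real n powr 6" by (rule powr_add)
      also have "real n powr 6 = (real n)^6" using np by (simp add: powr_realpow)
      finally show ?thesis .
    qed
    have "Z ^ 3 = real k ^ 3 * (b ^ 8) ^ 3 / ((real n)\<^sup>2)^3" unfolding Z_def by (simp add: power_mult_distrib power_divide)
    also have "(b ^ 8) ^ 3 = b ^ 24" by (simp flip: power_mult)
    also have "((real n)\<^sup>2)^3 = (real n)^6" by (simp flip: power_mult)
    finally show ?thesis unfolding e1 e2 by simp
  qed
  have Y: "(real n)\<^sup>2 * (real k * real n * eps) = Z"
  proof -
    have "(real n)\<^sup>2 * (real k * real n * eps) = real k * b ^ 8 * ((real n)^3 / (real n)^5)"
      unfolding eps_eq by (simp add: power2_eq_square power3_eq_cube)
    also have "(real n)^3 / (real n)^5 = 1 / (real n)\<^sup>2" using np by (simp add: power_numeral_reduce)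
    finally show ?thesis unfolding Z_def by simp
  qed
  have "(Z ^ 3) powr (1/6) = sqrt Z"
  proof -
    have "(Z ^ 3) powr (1/6) = (Z powr 3) powr (1/6)" using Zp by (simp add: powr_realpow)
    also have "\<dots> = Z powr (1/2)" by (simp add: powr_powr)
    also have "\<dots> = sqrt Z" using Zp by (simp add: powr_half_sqrt)
    finally show ?thesis .
  qed
  then show "sqrt ((real n)\<^sup>2 * (real k * real n * eps)) \<le> (real k ^ 3 / real n powr (z - 9)) powr (1/6)"
    unfolding Y X by simp
  have T: "(real k ^ 27 / real n powr (z - 15)) powr (1/24) = real k powr (9/8) * b"
  proof -
    have "real k ^ 27 / real n powr (z - 15) = real k ^ 27 * b ^ 24"
      unfolding e2 q_def by simp
    moreover have "(real k ^ 27 * b ^ 24) powr (1/24) = (real k ^ 27) powr (1/24) * (b ^ 24) powr (1/24)"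
      using kp bp by (simp add: powr_mult)
    moreover have "(real k ^ 27) powr (1/24) = real k powr (9/8)"
    proof -
      have "(real k ^ 27) powr (1/24) = (real k powr 27) powr (1/24)" using kp by (simp add: powr_realpow)
      also have "\<dots> = real k powr (9/8)" by (subst powr_powr) simp
      finally show ?thesis .
    qed
    moreover have "(b ^ 24) powr (1/24) = b"
    proof -
      have "(b ^ 24) powr (1/24) = (b powr 24) powr (1/24)" using bp by (simp add: powr_realpow)
      also have "\<dots> = b" using bp by (subst powr_powr) simp
      finally show ?thesis .
    qed
    ultimately show ?thesis by simp
  qed
  have t1: "real k * (real n)^4 * eps = real k * b ^ 8 / real n"
  proof -
    have "real k * (real n)^4 * eps = real k * b ^ 8 * ((real n)^4 / (real n)^5)"
      unfolding eps_eq by simp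
    also have "(real n)^4 / (real n)^5 = 1 / real n" using np by (simp add: power_numeral_reduce)
    finally show ?thesis by simp
  qed
  have t2: "real n * sqrt (real k * real n * eps) = sqrt (real k) * b ^ 4 / real n"
  proof -
    have "real k * real n * eps = real k * b ^ 8 * (real n / (real n)^5)"
      unfolding eps_eq by simp
    also have "real n / (real n)^5 = 1 / (real n)^4" using np by (simp add: power_numeral_reduce)
    also have "real k * b ^ 8 * (1 / (real n)^4) = real k * ((b ^ 4) / (real n)\<^sup>2)\<^sup>2"
      by (simp add: power_divide flip: power_mult)
    finally have ee: "real k * real n * eps = real k * (b ^ 4 / (real n)\<^sup>2)\<^sup>2" .
    have "sqrt (real k * real n * eps) = sqrt (real k) * sqrt ((b ^ 4 / (real n)\<^sup>2)\<^sup>2)"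
      unfolding ee by (rule real_sqrt_mult)
    also have "sqrt ((b ^ 4 / (real n)\<^sup>2)\<^sup>2) = b ^ 4 / (real n)\<^sup>2" using bp np by simp
    finally have "sqrt (real k * real n * eps) = sqrt (real k) * (b ^ 4 / (real n)\<^sup>2)" .
    then show ?thesis using np by (simp add: power2_eq_square)
  qed
  have k98: "real k \<le> real k powr (9/8)"
  proof -
    have "real k powr 1 \<le> real k powr (9/8)" using k by (intro powr_mono) auto
    then show ?thesis using kp by simp
  qed
  have sk: "sqrt (real k) \<le> real k"
  proof -
    have "real k * 1 \<le> real k * real k" using k by (intro mult_left_mono) auto
    then have "sqrt (real k) \<le> sqrt (real k * real k)" by (intro real_sqrt_le_mono) simp
    then show ?thesis by simp
  qed
  have bb1: "b ^ 8 \<le> b ^ 1" using bp b1 by (intro power_decreasing) auto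
  have bb2: "b ^ 4 \<le> b ^ 1" using bp b1 by (intro power_decreasing) auto
  have s2: "sqrt (2 / n) \<le> 2"
  proof -
    have "2 / real n \<le> 2" using n by (simp add: divide_le_eq)
    then have "sqrt (2 / real n) \<le> sqrt 2" by (rule real_sqrt_le_mono)
    also have "sqrt 2 \<le> sqrt (2 * 2)" by (rule real_sqrt_le_mono) simp
    also have "sqrt (2 * 2) = (2::real)" by simp
    finally show ?thesis .
  qed
  have A: "real k * b ^ 8 / real n \<le> real k powr (9/8) * b"
  proof -
    have "real k * b ^ 8 / real n \<le> real k * b ^ 8" using n kp bp by (simp add: divide_le_eq)
    also have "\<dots> \<le> real k powr (9/8) * b" using k98 bb1 kp bp by (intro mult_mono) auto
    finally show ?thesis .
  qed
  have B: "sqrt (real k) * b ^ 4 / real n \<le> real k powr (9/8) * b"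
  proof -
    have "sqrt (real k) * b ^ 4 / real n \<le> sqrt (real k) * b ^ 4" using n kp bp by (simp add: divide_le_eq)
    also have "\<dots> \<le> real k powr (9/8) * b" using k98 sk bb2 kp bp by (intro mult_mono) auto
    finally show ?thesis .
  qed
  have "2 * sqrt (2 / n) * (real k * (real n)^4 * eps) \<le> 2 * 2 * (real k powr (9/8) * b)"
    unfolding t1 using A s2 by (intro mult_mono) auto
  moreover have "2 * n * sqrt (real k * real n * eps) \<le> 2 * (real k powr (9/8) * b)"
    using B t2 by simp
  ultimately show "2 * sqrt (2 / n) * (real k * (real n)^4 * eps) + 2 * n * sqrt (real k * real n * eps)
           \<le> 6 * (real k ^ 27 / real n powr (z - 15)) powr (1/24)" unfolding T by linarith
qed

lemma inf_attained:
  fixes f :: "'b \<Rightarrow> ereal"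
  assumes "finite A" "A \<noteq> {}"
  shows "\<exists>p\<in>A. (INF q\<in>A. f q) = f p"
proof -
  have "Inf (f ` A) = Min (f ` A)" using assms by (simp add: Min_Inf)
  moreover have "Min (f ` A) \<in> f ` A" using assms by (intro Min_in) auto
  ultimately show ?thesis by auto
qed

lemma set_dist_nn: "0 \<le> set_dist S T"
  unfolding set_dist_def by (rule INF_greatest) simp

lemma cross_aux:
  fixes K :: "real \<Rightarrow> real" and A \<alpha> \<sigma> z mr Dm dst :: real and n :: nat
  assumes AK1_pos: "\<forall>t\<ge>0. K t > 0"
    and AK3: "\<alpha> > 0" "\<forall>s t. 0 \<le> t \<longrightarrow> t \<le> s \<longrightarrow> K s / K t \<le> A * exp (- ((s - t) powr \<alpha>))"
    and A1: "1 \<le> A" and n2: "2 \<le> n" and z: "15 \<le> z" and sig: "0 < \<sigma>"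
    and Dm: "0 \<le> Dm" "Dm < mr"
    and sP: "\<sigma> < (mr - Dm) * (ln (A * real n powr (z / 3))) powr (- 1 / \<alpha>)"
    and dst: "mr \<le> dst"
  shows "K (dst / \<sigma>) \<le> real n powr (- z / 3) * K (Dm / \<sigma>)"
proof -
  define s where "s = dst / \<sigma>"
  define t where "t = Dm / \<sigma>"
  define g where "g = (mr - Dm) / \<sigma>"
  define N where "N = A * real n powr (z / 3)"
  define L where "L = ln N"
  have t0: "0 \<le> t" unfolding t_def using Dm sig by simp
  have ts: "t \<le> s" unfolding t_def s_def using Dm dst sig by (simp add: divide_right_mono)
  have gp: "0 < g" unfolding g_def using Dm sig by simp
  have gst: "g \<le> s - t" unfolding g_def s_def t_def using dst sig by (simp add: diff_divide_distrib[symmetric] divide_right_mono)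
  have np1: "1 < real n powr (z / 3)" using n2 z by (intro gr_one_powr) auto
  have N1: "1 < N" unfolding N_def using A1 np1 by (metis less_le_trans mult_le_cancel_right1 order_less_imp_le mult.commute
      less_1_mult order_le_less)
  have Lp: "0 < L" unfolding L_def using N1 by simp
  have "\<sigma> < (mr - Dm) * L powr (- 1 / \<alpha>)" using sP unfolding L_def N_def .
  then have "1 / L powr (- 1 / \<alpha>) < (mr - Dm) / \<sigma>"
    using sig Lp by (simp add: field_simps)
  moreover have "1 / L powr (- 1 / \<alpha>) = L powr (1 / \<alpha>)"
    using Lp by (simp add: powr_minus divide_inverse)
  ultimately have gL: "L powr (1 / \<alpha>) < g" unfolding g_def by simp
  have "L = (L powr (1 / \<alpha>)) powr \<alpha>" using Lp AK3(1) by (simp add: powr_powr)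
  also have "\<dots> \<le> g powr \<alpha>" using gL AK3(1) by (intro powr_mono2) auto
  also have "\<dots> \<le> (s - t) powr \<alpha>" using gst gp AK3(1) by (intro powr_mono2) auto
  finally have Lst: "L \<le> (s - t) powr \<alpha>" .
  have "exp (- ((s - t) powr \<alpha>)) \<le> exp (- L)" using Lst by simp
  also have "exp (- L) = 1 / N" unfolding L_def using N1 by (simp add: exp_minus divide_inverse)
  finally have "A * exp (- ((s - t) powr \<alpha>)) \<le> A * (1 / N)" using A1 by (intro mult_left_mono) auto
  also have "A * (1 / N) = real n powr (- z / 3)" unfolding N_def using A1 n2
    by (simp add: powr_minus_divide)
  finally have rat: "K s / K t \<le> real n powr (- z / 3)" using AK3(2) t0 ts by (meson order_trans)
  have Kt: "0 < K t" using AK1_pos t0 by simp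
  then show ?thesis using rat unfolding s_def[symmetric] t_def[symmetric] by (simp add: divide_le_eq mult.commute)
qed

theorem lemma12:
  fixes K :: "real \<Rightarrow> real" and cK A \<alpha> \<sigma> z :: real
    and n k :: nat and x :: "nat \<Rightarrow> 'a::euclidean_space"
    and C :: "nat \<Rightarrow> 'a set" and dl :: "nat \<Rightarrow> real" and \<delta> :: ereal
    and U :: "nat \<Rightarrow> nat \<Rightarrow> real" and lam :: "nat \<Rightarrow> real"
  assumes AK1_pos: "\<forall>t\<ge>0. K t > 0"
    and AK1_mono: "\<forall>s t. 0 \<le> s \<longrightarrow> s \<le> t \<longrightarrow> K t \<le> K s"
    and AK2_zero: "K 0 = 1"
    and AK2_int: "cK > 0" "((\<lambda>v::'a. cK * K (norm v)) has_integral 1) UNIV"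
    and AK3: "A > 0" "\<alpha> > 0"
      "\<forall>s t. 0 \<le> t \<longrightarrow> t \<le> s \<longrightarrow> K s / K t \<le> A * exp (- ((s - t) powr \<alpha>))"
    and pts: "inj_on x {..<n}"
    and part_ne: "\<forall>l<k. C l \<noteq> {}"
    and part_cover: "(\<Union>l<k. C l) = x ` {..<n}"
    and part_disj: "\<forall>l<k. \<forall>m<k. l \<noteq> m \<longrightarrow> C l \<inter> C m = {}"
    and conn: "\<forall>l<k. connected_at_dist (dl l) (C l)"
    and delta_def: "\<delta> = Min ((\<lambda>m. set_dist (C m) (x ` {..<n} - C m)) ` {..<k})
                          - ereal (Max (dl ` {..<k}))"
    and delta_pos: "\<delta> > 0"
    and eig: "ordered_orthonormal_eigenbasis n (laplacian n K \<sigma> x) U lam"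
    and z: "real n powr (z - 15) \<ge> 81 * real k ^ 15"
    and sigma: "0 < \<sigma>" "ereal \<sigma> < \<delta> * ereal ((ln (A * real n powr (z / 3))) powr (- 1 / \<alpha>))"
  shows "(\<forall>l<k. \<forall>i<n. \<forall>j<n. x i \<in> C l \<and> x j \<in> C l \<longrightarrow>
            row_dist k U i j \<le> (real k ^ 3 / real n powr (z - 9)) powr (1 / 6)) \<and>
         (\<forall>l<k. \<forall>i<n. \<forall>j<n. x i \<in> C l \<and> x j \<notin> C l \<longrightarrow>
            row_dist k U i j \<ge> sqrt (2 / real n) - 6 * (real k ^ 27 / real n powr (z - 15)) powr (1 / 24))"
proof (cases "k = 0")
  case True then show ?thesis by simp
next
  case False
  then have k1: "1 \<le> k" by simp
  define X where "X = x ` {..<n}"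
  have CX: "\<And>l. l < k \<Longrightarrow> C l \<subseteq> X" using part_cover unfolding X_def by blast
  have n1: "1 \<le> n"
  proof -
    obtain p where "p \<in> C 0" using part_ne k1 by fastforce
    then have "p \<in> X" using CX k1 by auto
    then show ?thesis unfolding X_def by (cases n) auto
  qed
  have n2: "2 \<le> n"
  proof (rule ccontr)
    assume "\<not> 2 \<le> n"
    then have "n = 1" using n1 by simp
    then have "(81::real) * real k ^ 15 \<le> 1" using z by simp
    moreover have "(1::real) \<le> real k ^ 15" using k1 by simp
    ultimately show False by simp
  qed
  have z15: "15 \<le> z"
  proof (rule ccontr)
    assume "\<not> 15 \<le> z"
    then have "real n powr (z - 15) < 1" using n2 by (intro powr_less_one) auto
    moreover have "(1::real) \<le> real k ^ 15" using k1 by simp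
    ultimately show False using z by simp
  qed
  have A1: "1 \<le> A"
  proof -
    have "K 0 / K 0 \<le> A * exp (- ((0 - 0) powr \<alpha>))" using AK3(3) by blast
    then show ?thesis using AK2_zero by simp
  qed
  define cl where "cl i = (THE l. l < k \<and> x i \<in> C l)" for i
  have cl_uniq: "cl i = l" if "i < n" "l < k" "x i \<in> C l" for i l
  proof -
    have u: "l' = l" if "l' < k" "x i \<in> C l'" for l'
    proof (rule ccontr)
      assume "l' \<noteq> l"
      then have "C l' \<inter> C l = {}" using part_disj \<open>l' < k\<close> \<open>l < k\<close> by simp
      then show False using \<open>x i \<in> C l'\<close> \<open>x i \<in> C l\<close> by blast
    qed
    show ?thesis unfolding cl_def
    proof (rule the_equality)
      show "l < k \<and> x i \<in> C l" using that by simp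
    next
      fix l' assume "l' < k \<and> x i \<in> C l'"
      then show "l' = l" using u by blast
    qed
  qed
  have cl_in: "cl i < k \<and> x i \<in> C (cl i)" if "i < n" for i
  proof -
    have "x i \<in> (\<Union>l<k. C l)" using that part_cover by simp
    then obtain l where "l < k" "x i \<in> C l" by blast
    then show ?thesis using cl_uniq[OF that] by simp
  qed
  define Dm where "Dm = Max (dl ` {..<k})"
  have dl_le: "dl l \<le> Dm" if "l < k" for l unfolding Dm_def using that by (intro Max_ge) auto
  have rows: "\<forall>i<n. \<forall>j<n. (\<Sum>a<n. U i a * U j a) = (if i = j then 1 else 0)"
    using rows_orthonormal eig unfolding ordered_orthonormal_eigenbasis_def by blast
  show ?thesis
  proof (cases "Dm < 0")
    case True
    have single: "p = q" if l: "l < k" and pq: "p \<in> C l" "q \<in> C l" for l p q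
    proof (rule ccontr)
      assume ne: "p \<noteq> q"
      have "ereal (dl l) < 0" using dl_le[OF l] True by simp
      then have sd: "set_dist {p} (C l - {p}) > ereal (dl l)"
        using set_dist_nn[of "{p}" "C l - {p}"] by (rule less_le_trans)
      moreover have "{p} \<noteq> {}" "C l - {p} \<noteq> {}" "{p} \<union> (C l - {p}) = C l" "{p} \<inter> (C l - {p}) = {}"
        using pq ne by auto
      ultimately have P: "{p} \<noteq> {} \<and> C l - {p} \<noteq> {} \<and> {p} \<union> (C l - {p}) = C l \<and> {p} \<inter> (C l - {p}) = {}
          \<and> set_dist {p} (C l - {p}) > ereal (dl l)" by simp
      have c: "\<forall>S1 S2. \<not> (S1 \<noteq> {} \<and> S2 \<noteq> {} \<and> S1 \<union> S2 = C l \<and> S1 \<inter> S2 = {} \<and> set_dist S1 S2 > ereal (dl l))"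
        using conn l unfolding connected_at_dist_def by blast
      show False using c[THEN spec[of _ "{p}"], THEN spec[of _ "C l - {p}"]] P by simp
    qed
    have kn: "k = n"
    proof -
      have fin: "\<forall>l\<in>{..<k}. finite (C l)"
      proof
        fix l assume "l \<in> {..<k}"
        then have "C l \<subseteq> X" using CX by auto
        then show "finite (C l)" unfolding X_def by (rule finite_subset) auto
      qed
      have c1: "card (C l) = 1" if lk: "l < k" for l
      proof -
        obtain p where p: "p \<in> C l" using part_ne lk by blast
        then have "C l = {p}" using single[OF lk] by blast
        then show ?thesis by simp
      qed
      have "card X = n" unfolding X_def using pts by (simp add: card_image)
      moreover have "card X = (\<Sum>l<k. card (C l))" unfolding X_def part_cover[symmetric]
        using fin part_disj by (intro card_UN_disjoint) auto
      moreover have "(\<Sum>l<k. card (C l)) = k" using c1 by simp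
      ultimately show ?thesis by simp
    qed
    show ?thesis
    proof (intro conjI allI impI)
      fix l i j assume "l < k" "i < n" "j < n" and h: "x i \<in> C l \<and> x j \<in> C l"
      then have "x i = x j" using single by blast
      then have "i = j" using pts \<open>i < n\<close> \<open>j < n\<close> by (auto dest: inj_onD)
      then show "row_dist k U i j \<le> (real k ^ 3 / real n powr (z - 9)) powr (1 / 6)"
        unfolding row_dist_def by simp
    next
      fix l i j assume "l < k" "i < n" "j < n" and h: "x i \<in> C l \<and> x j \<notin> C l"
      then have ij: "i \<noteq> j" by auto
      have "(\<Sum>a<k. (U i a - U j a)\<^sup>2) = (\<Sum>a<n. U i a * U i a) + (\<Sum>a<n. U j a * U j a) - 2 * (\<Sum>a<n. U i a * U j a)"
        unfolding kn by (simp add: power2_eq_square algebra_simps sum.distrib sum_subtractf sum_distrib_left)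
      also have "\<dots> = 2" using rows \<open>i < n\<close> \<open>j < n\<close> ij by simp
      finally have rd: "row_dist k U i j = sqrt 2" unfolding row_dist_def by simp
      have "sqrt (2 / real n) \<le> sqrt 2" using n1 by (intro real_sqrt_le_mono) (simp add: divide_le_eq)
      moreover have "0 \<le> (real k ^ 27 / real n powr (z - 15)) powr (1 / 24)" by simp
      ultimately show "sqrt (2 / real n) - 6 * (real k ^ 27 / real n powr (z - 15)) powr (1 / 24) \<le> row_dist k U i j"
        unfolding rd by linarith
    qed
  next
    case False
    then have Dm0: "0 \<le> Dm" by simp
    define w where "w = K (Dm / \<sigma>)"
    define eps where "eps = real n powr (- z / 3)"
    define E where "E l i j = (norm (x i - x j) \<le> dl l)" for l i j
    have wpos: "0 < w" unfolding w_def using AK1_pos Dm0 sigma(1) by simp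
    have cross: "affinity K \<sigma> x i j \<le> eps * w" if ij: "i < n" "j < n" "cl i \<noteq> cl j" for i j
    proof -
      define l where "l = cl i"
      have l: "l < k" "x i \<in> C l" using cl_in[OF ij(1)] l_def by auto
      have l': "cl j < k" "x j \<in> C (cl j)" using cl_in[OF ij(2)] by auto
      have "C l \<inter> C (cl j) = {}" using part_disj l(1) l'(1) ij(3) l_def by simp
      then have xj: "x j \<notin> C l" using l'(2) by blast
      have xjX: "x j \<in> X - C l" using xj ij(2) unfolding X_def by simp
      define Mn where "Mn = Min ((\<lambda>m. set_dist (C m) (X - C m)) ` {..<k})"
      have "set_dist (C l) (X - C l) \<le> ereal (dist (x i) (x j))"
        unfolding set_dist_def using l(2) xjX by (intro INF_lower2[of "(x i, x j)"]) auto
      moreover have "Mn \<le> set_dist (C l) (X - C l)" unfolding Mn_def using l(1) by (intro Min_le) auto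
      ultimately have Mn_le: "Mn \<le> ereal (norm (x i - x j))" by (simp add: dist_norm)
      have "0 \<in> {..<k}" using k1 by simp
      then have kne: "{..<k} \<noteq> {}" by blast
      have Mn_nn: "0 \<le> Mn" unfolding Mn_def using kne by (subst Min_ge_iff) (auto simp: set_dist_nn)
      obtain mr where mr: "Mn = ereal mr" using Mn_le Mn_nn by (cases Mn) auto
      have dd: "\<delta> = ereal (mr - Dm)" using delta_def unfolding Mn_def[symmetric] X_def[symmetric] Dm_def[symmetric] mr by simp
      have mrD: "Dm < mr" using delta_pos dd by simp
      have "ereal \<sigma> < ereal ((mr - Dm) * (ln (A * real n powr (z / 3))) powr (- 1 / \<alpha>))"
        using sigma(2) dd by simp
      then have sP: "\<sigma> < (mr - Dm) * (ln (A * real n powr (z / 3))) powr (- 1 / \<alpha>)" by simp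
      have "mr \<le> norm (x i - x j)" using Mn_le mr by simp
      then have "K (norm (x i - x j) / \<sigma>) \<le> real n powr (- z / 3) * K (Dm / \<sigma>)"
        using cross_aux[OF AK1_pos AK3(2) AK3(3) A1 n2 z15 sigma(1) Dm0 mrD sP] by blast
      then show ?thesis unfolding affinity_def eps_def w_def .
    qed
    have within: "w \<le> affinity K \<sigma> x i j" if "l < k" "i < n" "j < n" "cl i = l" "cl j = l" "E l i j" for l i j
    proof -
      have "norm (x i - x j) / \<sigma> \<le> Dm / \<sigma>"
        using that dl_le[of l] sigma(1) unfolding E_def by (intro divide_right_mono) auto
      then show ?thesis unfolding w_def affinity_def using AK1_mono sigma(1) by simp
    qed
    have connI: "\<exists>u\<in>S. \<exists>v\<in>{i. i < n \<and> cl i = l} - S. E l u v"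
      if l: "l < k" and S: "S \<subseteq> {i. i < n \<and> cl i = l}" "S \<noteq> {}" "S \<noteq> {i. i < n \<and> cl i = l}" for l S
    proof -
      define S1 where "S1 = x ` S"
      define S2 where "S2 = C l - x ` S"
      obtain v0 where v0: "v0 \<in> {i. i < n \<and> cl i = l} - S" using S by blast
      have v0C: "x v0 \<in> C l" using v0 cl_in by auto
      have v0S: "x v0 \<notin> x ` S" using v0 S(1) pts by (auto dest: inj_onD)
      have S1C: "S1 \<subseteq> C l" unfolding S1_def using S(1) cl_in by auto
      have props: "S1 \<noteq> {}" "S2 \<noteq> {}" "S1 \<union> S2 = C l" "S1 \<inter> S2 = {}"
        using S(2) v0C v0S S1C unfolding S1_def S2_def by auto
      have c: "\<forall>S1 S2. \<not> (S1 \<noteq> {} \<and> S2 \<noteq> {} \<and> S1 \<union> S2 = C l \<and> S1 \<inter> S2 = {} \<and> set_dist S1 S2 > ereal (dl l))"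
        using conn l unfolding connected_at_dist_def by blast
      have "\<not> set_dist S1 S2 > ereal (dl l)" using c[THEN spec[of _ S1], THEN spec[of _ S2]] props by simp
      then have sd: "set_dist S1 S2 \<le> ereal (dl l)" by simp
      have finX: "finite X" unfolding X_def by simp
      have "finite S1" using S1C CX[OF l] finX by (meson finite_subset)
      moreover have "finite S2" unfolding S2_def using CX[OF l] finX by (meson finite_subset Diff_subset order_trans)
      ultimately have fin: "finite (S1 \<times> S2)" by simp
      have ne: "S1 \<times> S2 \<noteq> {}" using props by simp
      obtain pq where pq: "pq \<in> S1 \<times> S2" and eq: "set_dist S1 S2 = ereal (dist (fst pq) (snd pq))"
        using inf_attained[OF fin ne, of "\<lambda>p. ereal (dist (fst p) (snd p))"] unfolding set_dist_def by blast
      obtain u where u: "u \<in> S" "fst pq = x u" using pq unfolding S1_def by auto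
      have q: "snd pq \<in> C l" "snd pq \<notin> x ` S" using pq unfolding S2_def by auto
      then have "snd pq \<in> X" using CX[OF l] by auto
      then obtain v where v: "v < n" "snd pq = x v" unfolding X_def by auto
      have vl: "cl v = l" using cl_uniq[OF v(1) l] q(1) v(2) by simp
      have vS: "v \<notin> S" using q(2) v(2) by auto
      have "norm (x u - x v) \<le> dl l" using sd eq u v by (simp add: dist_norm)
      then show ?thesis using u vl vS v(1) unfolding E_def by blast
    qed
    interpret spec_setting n k cl "affinity K \<sigma> x" U lam w eps E
    proof (unfold_locales)
      show "\<And>i. i < n \<Longrightarrow> cl i < k" using cl_in by blast
      show "\<And>l. l < k \<Longrightarrow> \<exists>i<n. cl i = l"
      proof -
        fix l assume l: "l < k"
        obtain p where "p \<in> C l" using part_ne l by blast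
        moreover then obtain i where "i < n" "p = x i" using CX[OF l] unfolding X_def by auto
        ultimately show "\<exists>i<n. cl i = l" using cl_uniq l by blast
      qed
      show "\<And>i j. affinity K \<sigma> x i j = affinity K \<sigma> x j i" unfolding affinity_def by (simp add: norm_minus_commute)
      show "\<And>i j. 0 \<le> affinity K \<sigma> x i j" unfolding affinity_def using AK1_pos sigma(1) by (simp add: less_imp_le)
      show "\<forall>a<n. \<forall>b<n. (\<Sum>i<n. U i a * U i b) = (if a = b then 1 else 0)"
        using eig unfolding ordered_orthonormal_eigenbasis_def by blast
      show "\<forall>a<n. \<forall>i<n. (\<Sum>j<n. ((if i = j then \<Sum>m<n. affinity K \<sigma> x i m else 0) - affinity K \<sigma> x i j) * U j a) = lam a * U i a"
        using eig unfolding ordered_orthonormal_eigenbasis_def laplacian_def by blast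
      show "\<forall>a b. a \<le> b \<longrightarrow> b < n \<longrightarrow> lam a \<le> lam b"
        using eig unfolding ordered_orthonormal_eigenbasis_def by blast
      show "0 < w" by (rule wpos)
      show "0 \<le> eps" unfolding eps_def by simp
      show "\<And>i j. i < n \<Longrightarrow> j < n \<Longrightarrow> cl i \<noteq> cl j \<Longrightarrow> affinity K \<sigma> x i j \<le> eps * w" by (rule cross)
      show "\<And>l i j. l < k \<Longrightarrow> i < n \<Longrightarrow> j < n \<Longrightarrow> cl i = l \<Longrightarrow> cl j = l \<Longrightarrow> E l i j \<Longrightarrow> w \<le> affinity K \<sigma> x i j"
        by (rule within)
      show "\<And>l S. l < k \<Longrightarrow> S \<subseteq> {i. i < n \<and> cl i = l} \<Longrightarrow> S \<noteq> {} \<Longrightarrow> S \<noteq> {i. i < n \<and> cl i = l}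
                 \<Longrightarrow> \<exists>u\<in>S. \<exists>v\<in>{i. i < n \<and> cl i = l} - S. E l u v" by (rule connI)
    qed
    have nf: "sqrt ((real n)\<^sup>2 * (real k * real n * eps)) \<le> (real k ^ 3 / real n powr (z - 9)) powr (1/6)"
      "2 * sqrt (2 / n) * (real k * (real n)^4 * eps) + 2 * n * sqrt (real k * real n * eps)
           \<le> 6 * (real k ^ 27 / real n powr (z - 15)) powr (1/24)"
      using num_facts[OF n1 k1 z15] unfolding eps_def by auto
    show ?thesis
    proof (intro conjI allI impI)
      fix l i j assume "l < k" "i < n" "j < n" and h: "x i \<in> C l \<and> x j \<in> C l"
      then have "i \<in> I l" "j \<in> I l" using cl_uniq unfolding I_def by auto
      then have "(\<Sum>a<k. (U i a - U j a)\<^sup>2) \<le> (real n)\<^sup>2 * (real k * real n * eps)"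
        using within_bound \<open>l < k\<close> by blast
      then have "row_dist k U i j \<le> sqrt ((real n)\<^sup>2 * (real k * real n * eps))"
        unfolding row_dist_def by (rule real_sqrt_le_mono)
      then show "row_dist k U i j \<le> (real k ^ 3 / real n powr (z - 9)) powr (1 / 6)" using nf(1) by simp
    next
      fix l i j assume l: "l < k" and ij: "i < n" "j < n" and h: "x i \<in> C l \<and> x j \<notin> C l"
      define l' where "l' = cl j"
      have l': "l' < k" "x j \<in> C l'" using cl_in[OF ij(2)] l'_def by auto
      have ll': "l \<noteq> l'" using h l' by auto
      have iI: "i \<in> I l" using cl_uniq[OF ij(1) l] h ij unfolding I_def by auto
      have jI: "j \<in> I l'" using l'_def ij unfolding I_def by auto
      have cb: "L2_set (\<lambda>a. U i a - U j a) {..<k} \<ge>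
           sqrt (2 / n) - 2 * sqrt (2 / n) * rho - 2 * n * sqrt (real k * real n * eps)"
        by (rule cross_bound[OF l l'(1) ll' iI jI])
      have "2 * sqrt (2 / n) * rho \<le> 2 * sqrt (2 / n) * (real k * (real n)^4 * eps)"
        using rho_bound by (intro mult_left_mono) auto
      moreover have "row_dist k U i j = L2_set (\<lambda>a. U i a - U j a) {..<k}"
        unfolding row_dist_def L2_set_def by simp
      ultimately show "sqrt (2 / real n) - 6 * (real k ^ 27 / real n powr (z - 15)) powr (1 / 24) \<le> row_dist k U i j"
        using cb nf(2) by linarith
    qed
  qed
qed

end
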